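(* Let $d\ge 1$, let $\Delta$ be a simplicial complex containing a $d$-dimensional cycle $\Omega$ whose $d$-faces are $F_1,\ldots,F_k$. Suppose there exist distinct $(d+1)$-faces $A_1,\ldots,A_\ell$ of the induced subcomplex $\Delta_{V(\Omega)}$ such that, over $\mathbb{Z}_2$, $$\partial_{d+1}\Big(\sum_{i=1}^\ell A_i\Big)=\sum_{j=1}^k F_j, \qquad ( * )$$ and no proper subset of $\{A_1,\ldots,A_\ell\}$ satisfies $( * )$. Then for any vertex $v\notin V(\Omega)$, the simplicial complex $\Phi=\langle F_1\cup\{v\},\ldots,F_k\cup\{v\},A_1,\ldots,A_\ell\rangle$ is a $(d+1)$-dimensional cycle.
   Context: A simplicial complex is a family of subsets (faces) of a finite vertex set closed under taking subsets; the dimension of a face $S$ is $|S|-1$, a $d$-face is a face of dimension $d$, facets are maximal faces, and $\langle G_1,\ldots,G_m\rangle$ denotes the simplicial complex whose facets are $G_1,\ldots,G_m$. $V(\Omega)$ is the vertex set of $\Omega$; for $W\subseteq V(\Delta)$, the induced subcomplex $\Delta_W$ consists of the faces of $\Delta$ contained in $W$. Over $\mathbb{Z}_2$, $C_d$ is the vector space with basis the $d$-faces and $\partial_d(F)$ is the sum of the $(d-1)$-faces contained in $F$. A complex is pure if all facets have the same dimension. A sequence $G_1,\ldots,G_m$ of $d$-faces is a $d$-path if $|G_i\cap G_{i+1}|=d$ for $1\le i\le m-1$. A pure $d$-dimensional complex is $d$-path-connected if every pair of its $d$-faces is joined by a $d$-path; its $d$-path-connected components are its maximal $d$-path-connected subcomplexes.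 A $d$-dimensional cycle is a pure $d$-dimensional simplicial complex $\Omega$ that is $d$-path-connected and in which every $(d-1)$-face of $\Omega$ is contained in an even number of $d$-faces of $\Omega$. *)

theory Defs
  imports Main
begin

definition simplicial_complex :: "'a set set \<Rightarrow> bool" where
  "simplicial_complex \<Delta> \<longleftrightarrow> finite \<Delta> \<and> (\<forall>S\<in>\<Delta>. finite S) \<and> (\<forall>S\<in>\<Delta>. \<forall>T. T \<subseteq> S \<longrightarrow> T \<in> \<Delta>)"

definition vertices :: "'a set set \<Rightarrow> 'a set" where
  "vertices \<Omega> = \<Union>\<Omega>"

definition faces_dim :: "'a set set \<Rightarrow> nat \<Rightarrow> 'a set set" where
  "faces_dim \<Delta> d = {S \<in> \<Delta>. card S = d + 1}"

definition facets :: "'a set set \<Rightarrow> 'a set set" where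
  "facets \<Delta> = {S \<in> \<Delta>. \<not> (\<exists>T\<in>\<Delta>. S \<subset> T)}"

definition induced :: "'a set set \<Rightarrow> 'a set \<Rightarrow> 'a set set" where
  "induced \<Delta> W = {S \<in> \<Delta>. S \<subseteq> W}"

definition generated :: "'a set set \<Rightarrow> 'a set set" where
  "generated \<G> = {T. \<exists>G\<in>\<G>. T \<subseteq> G}"

definition pure_dim :: "'a set set \<Rightarrow> nat \<Rightarrow> bool" where
  "pure_dim \<Delta> d \<longleftrightarrow> \<Delta> \<noteq> {} \<and> (\<forall>F\<in>facets \<Delta>. card F = d + 1)"

definition is_d_path :: "'a set set \<Rightarrow> nat \<Rightarrow> 'a set list \<Rightarrow> bool" where
  "is_d_path \<Delta> d ps \<longleftrightarrow> ps \<noteq> [] \<and> set ps \<subseteq> faces_dim \<Delta> d \<and>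
     (\<forall>i. Suc i < length ps \<longrightarrow> card (ps ! i \<inter> ps ! Suc i) = d)"

definition d_path_connected :: "'a set set \<Rightarrow> nat \<Rightarrow> bool" where
  "d_path_connected \<Delta> d \<longleftrightarrow> pure_dim \<Delta> d \<and>
     (\<forall>F\<in>faces_dim \<Delta> d. \<forall>G\<in>faces_dim \<Delta> d.
        \<exists>ps. is_d_path \<Delta> d ps \<and> hd ps = F \<and> last ps = G)"

text \<open>A d-dimensional cycle (d >= 1 in all uses).\<close>
definition is_cycle :: "'a set set \<Rightarrow> nat \<Rightarrow> bool" where
  "is_cycle \<Omega> d \<longleftrightarrow> simplicial_complex \<Omega> \<and> pure_dim \<Omega> d \<and> d_path_connected \<Omega> d \<and>
     (\<forall>\<sigma>\<in>faces_dim \<Omega> (d - 1). even (card {F \<in> faces_dim \<Omega> d. \<sigma> \<subseteq> F}))"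

text \<open>Z_2 chains are represented as finite sets of faces (sum = symmetric difference).\<close>
definition bd_Z2 :: "'a set set \<Rightarrow> 'a set set" where
  "bd_Z2 \<A> = {\<sigma>. odd (card {A \<in> \<A>. \<sigma> \<subseteq> A \<and> card A = Suc (card \<sigma>)})}"

end

theory Submission
  imports Defs
begin

lemma path_snoc:
  assumes "is_d_path D d ps" "z \<in> faces_dim D d" "card (last ps \<inter> z) = d"
  shows "is_d_path D d (ps @ [z])"
  unfolding is_d_path_def
proof (intro conjI allI impI)
  show "ps @ [z] \<noteq> []" by simp
  show "set (ps @ [z]) \<subseteq> faces_dim D d" using assms(1,2) by (auto simp: is_d_path_def)
  fix i assume i: "Suc i < length (ps @ [z])"
  have ne: "ps \<noteq> []" using assms(1) by (simp add: is_d_path_def)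
  show "card ((ps @ [z]) ! i \<inter> (ps @ [z]) ! Suc i) = d"
  proof (cases "Suc i < length ps")
    case True
    then show ?thesis using assms(1) by (simp add: nth_append is_d_path_def)
  next
    case False
    then have "i = length ps - 1" using i by simp
    then show ?thesis using ne assms(3) False
      by (simp add: nth_append last_conv_nth)
  qed
qed

lemma rtranclp_path:
  assumes "R\<^sup>*\<^sup>* x y"
    and "\<And>a b. R a b \<Longrightarrow> a \<in> faces_dim D d \<and> b \<in> faces_dim D d \<and> card (a \<inter> b) = d"
    and "x \<in> faces_dim D d"
  shows "\<exists>ps. is_d_path D d ps \<and> hd ps = x \<and> last ps = y"
  using assms(1)
proof induction
  case base
  then show ?case using assms(3) by (intro exI[of _ "[x]"]) (simp add: is_d_path_def)
next
  case (step y z)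
  then obtain ps where ps: "is_d_path D d ps" "hd ps = x" "last ps = y" by blast
  have "is_d_path D d (ps @ [z])" using path_snoc[OF ps(1)] assms(2)[OF step(2)] ps(3) by blast
  moreover have "ps \<noteq> []" using ps(1) by (simp add: is_d_path_def)
  ultimately show ?case using ps by (intro exI[of _ "ps @ [z]"]) simp
qed

theorem mainTheorem4:
  fixes \<Delta> \<Omega> \<A> :: "'a set set" and d :: nat and v :: 'a
  assumes "d \<ge> 1"
    and "simplicial_complex \<Delta>"
    and "\<Omega> \<subseteq> \<Delta>"
    and "is_cycle \<Omega> d"
    and "\<A> \<subseteq> faces_dim (induced \<Delta> (vertices \<Omega>)) (d + 1)"
    and "bd_Z2 \<A> = faces_dim \<Omega> d"
    and "\<forall>\<B>. \<B> \<subset> \<A> \<longrightarrow> bd_Z2 \<B> \<noteq> faces_dim \<Omega> d"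
    and "v \<in> vertices \<Delta>"
    and "v \<notin> vertices \<Omega>"
  shows "is_cycle (generated ((\<lambda>F. insert v F) ` faces_dim \<Omega> d \<union> \<A>)) (d + 1)"
proof -
  define K where "K = faces_dim \<Omega> d"
  define C where "C = (\<lambda>F. insert v F) ` K"
  define G where "G = C \<union> \<A>"
  define \<Phi> where "\<Phi> = generated G"
  have scO: "simplicial_complex \<Omega>" using assms(4) by (simp add: is_cycle_def)
  have finO: "finite \<Omega>" using scO by (simp add: simplicial_complex_def)
  have K: "F \<in> \<Omega> \<and> finite F \<and> card F = d + 1 \<and> v \<notin> F \<and> F \<subseteq> vertices \<Omega>" if "F \<in> K" for F
    using that scO assms(9) by (auto simp: K_def faces_dim_def simplicial_complex_def vertices_def)
  have finK: "finite K" using finO by (simp add: K_def faces_dim_def)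
  have finD: "finite \<Delta>" using assms(2) by (simp add: simplicial_complex_def)
  have AA: "A \<in> \<Delta> \<and> finite A \<and> card A = d + 2 \<and> v \<notin> A \<and> A \<subseteq> vertices \<Omega>" if "A \<in> \<A>" for A
    using that assms(5,2,9) by (auto simp: faces_dim_def induced_def simplicial_complex_def)
  have finA: "finite \<A>" using assms(5) finD
    by (meson AA finite_subset subsetI)
  have CC: "c \<in> C \<longleftrightarrow> (\<exists>F\<in>K. c = insert v F)" for c by (auto simp: C_def)
  have Gcard: "finite g \<and> card g = d + 2" if "g \<in> G" for g
    using that K AA by (auto simp: G_def C_def)
  have finG: "finite G" using finK finA by (simp add: G_def C_def)
  have Phi_eq: "\<Phi> = \<Union> (Pow ` G)" by (auto simp: \<Phi>_def generated_def)
  have sc: "simplicial_complex \<Phi>"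
    unfolding simplicial_complex_def Phi_eq using finG Gcard
    by (auto intro: finite_subset)
  have GPhi: "G \<subseteq> \<Phi>" by (auto simp: Phi_eq)
  have top: "faces_dim \<Phi> (d + 1) = G"
  proof
    show "G \<subseteq> faces_dim \<Phi> (d + 1)" using GPhi Gcard by (auto simp: faces_dim_def)
    show "faces_dim \<Phi> (d + 1) \<subseteq> G"
    proof
      fix T assume "T \<in> faces_dim \<Phi> (d + 1)"
      then obtain g where g: "g \<in> G" "T \<subseteq> g" "card T = d + 2"
        by (auto simp: faces_dim_def Phi_eq)
      then have "T = g" using Gcard[OF g(1)] by (metis card_subset_eq)
      then show "T \<in> G" using g by simp
    qed
  qed
  have Kne: "K \<noteq> {}"
  proof
    assume "K = {}"
    then have "bd_Z2 {} = faces_dim \<Omega> d" by (simp add: K_def bd_Z2_def)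
    moreover have "\<A> \<noteq> {}"
    proof
      assume "\<A> = {}" then have "faces_dim \<Omega> d = {}" using assms(6) by (simp add: bd_Z2_def)
      moreover have "\<Omega> \<noteq> {}" using assms(4) by (simp add: is_cycle_def pure_dim_def)
      then obtain S where S: "S \<in> \<Omega>" by blast
      have "\<exists>F\<in>facets \<Omega>. S \<subseteq> F"
      proof -
        define Ss where "Ss = {T \<in> \<Omega>. S \<subseteq> T}"
        have "finite Ss" "Ss \<noteq> {}" using finO S by (auto simp: Ss_def)
        then have "Max (card ` Ss) \<in> card ` Ss" by simp
        then obtain M where M0: "M \<in> Ss" "card M = Max (card ` Ss)" by force
        have M: "M \<in> Ss" "\<forall>T\<in>Ss. card M \<ge> card T" using M0 \<open>finite Ss\<close> by auto
        have fin: "\<forall>T\<in>\<Omega>. finite T" using scO by (simp add: simplicial_complex_def)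
        have "M \<in> facets \<Omega>"
        proof -
          have "\<not> (\<exists>T\<in>\<Omega>. M \<subset> T)"
          proof
            assume "\<exists>T\<in>\<Omega>. M \<subset> T"
            then obtain T where "T \<in> \<Omega>" "M \<subset> T" by blast
            then have "T \<in> Ss" "card M < card T" using M fin by (auto simp: Ss_def intro: psubset_card_mono)
            then show False using M by force
          qed
          then show ?thesis using M by (simp add: facets_def Ss_def)
        qed
        then show ?thesis using M by (auto simp: Ss_def)
      qed
      then obtain F where "F \<in> facets \<Omega>" by blast
      then have "F \<in> faces_dim \<Omega> d" using assms(4)
        by (simp add: is_cycle_def pure_dim_def faces_dim_def facets_def)
      ultimately show False by simp
    qed
    ultimately show False using assms(7) by auto
  qed
  then obtain F0 where F0: "F0 \<in> K" by blast
  define c0 where "c0 = insert v F0"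
  define R where "R = (\<lambda>x y. x \<in> G \<and> y \<in> G \<and> card (x \<inter> y) = d + 1)"
  have symR: "symp R" by (auto simp: R_def symp_def Int_commute)
  have Rsym: "R\<^sup>*\<^sup>* x y \<Longrightarrow> R\<^sup>*\<^sup>* y x" for x y using symp_rtranclp[OF symR] by (meson sympD)
  have pathO: "\<And>ps. is_d_path \<Omega> d ps \<Longrightarrow> \<forall>i<length ps. R\<^sup>*\<^sup>* (insert v (ps!0)) (insert v (ps!i))"
  proof -
    fix ps assume p: "is_d_path \<Omega> d ps"
    have inK: "ps ! i \<in> K" if "i < length ps" for i
      using p that by (auto simp: is_d_path_def K_def)
    show "\<forall>i<length ps. R\<^sup>*\<^sup>* (insert v (ps!0)) (insert v (ps!i))"
    proof (intro allI impI)
      fix i assume "i < length ps"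
      then show "R\<^sup>*\<^sup>* (insert v (ps!0)) (insert v (ps!i))"
      proof (induction i)
        case 0 then show ?case by simp
      next
        case (Suc i)
        have a: "ps ! i \<in> K" "ps ! Suc i \<in> K" using Suc.prems inK by auto
        have "card (ps ! i \<inter> ps ! Suc i) = d" using p Suc.prems by (simp add: is_d_path_def)
        moreover have "insert v (ps ! i) \<inter> insert v (ps ! Suc i) = insert v (ps ! i \<inter> ps ! Suc i)" by auto
        moreover have "v \<notin> ps ! i \<inter> ps ! Suc i" "finite (ps ! i \<inter> ps ! Suc i)" using K[OF a(1)] by auto
        ultimately have "R (insert v (ps!i)) (insert v (ps ! Suc i))"
          using a by (simp add: R_def G_def C_def)
        then show ?case using Suc by (meson Suc_lessD rtranclp.rtrancl_into_rtrancl)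
      qed
    qed
  qed
  have cone_reach: "R\<^sup>*\<^sup>* c0 (insert v F)" if FK: "F \<in> K" for F
  proof -
    have "d_path_connected \<Omega> d" using assms(4) by (simp add: is_cycle_def)
    then obtain ps where ps: "is_d_path \<Omega> d ps" "hd ps = F0" "last ps = F"
      using F0 FK unfolding d_path_connected_def K_def by blast
    have ne: "ps \<noteq> []" using ps by (simp add: is_d_path_def)
    have "R\<^sup>*\<^sup>* (insert v (ps!0)) (insert v (ps!(length ps - 1)))" using pathO[OF ps(1)] ne by simp
    then show ?thesis using ps ne by (simp add: c0_def hd_conv_nth last_conv_nth)
  qed
  define CC' where "CC' = {A \<in> \<A>. \<not> R\<^sup>*\<^sup>* c0 A}"
  have CCempty: "CC' = {}"
  proof (rule ccontr)
    assume ne: "CC' \<noteq> {}"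
    have key: "(\<forall>A'\<in>\<A>. \<sigma> \<subseteq> A' \<longrightarrow> A' \<in> CC') \<and> \<sigma> \<notin> K"
      if A: "A \<in> CC'" "\<sigma> \<subseteq> A" "card A = Suc (card \<sigma>)" for A \<sigma>
    proof -
      have Ai: "A \<in> \<A>" using A by (simp add: CC'_def)
      note AAi = AA[OF Ai]
      have cs: "card \<sigma> = d + 1" using A(3) AAi by simp
      have fs: "finite \<sigma>" using A(2) AAi finite_subset by blast
      have 1: "A' \<in> CC'" if "A' \<in> \<A>" "\<sigma> \<subseteq> A'" for A'
      proof (rule ccontr)
        assume n: "A' \<notin> CC'"
        then have r: "R\<^sup>*\<^sup>* c0 A'" using that by (simp add: CC'_def)
        have "A' \<noteq> A" using n A by auto
        have "card (A' \<inter> A) = d + 1"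
        proof -
          have "card \<sigma> \<le> card (A' \<inter> A)" using that A AAi by (intro card_mono) auto
          moreover have "card (A' \<inter> A) < card A"
          proof (rule psubset_card_mono)
            show "finite A" using AAi by simp
            show "A' \<inter> A \<subset> A"
            proof
              show "A' \<inter> A \<subseteq> A" by auto
              show "A' \<inter> A \<noteq> A"
              proof
                assume "A' \<inter> A = A" then have "A \<subseteq> A'" by auto
                then have "A = A'" using AA[OF that(1)] AAi by (metis card_subset_eq)
                then show False using \<open>A' \<noteq> A\<close> by simp
              qed
            qed
          qed
          ultimately show ?thesis using cs AAi by simp
        qed
        then have "R A' A" using that Ai by (simp add: R_def G_def)
        then have "R\<^sup>*\<^sup>* c0 A" using r by (meson rtranclp.rtrancl_into_rtrancl)
        then show False using A by (simp add: CC'_def)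
      qed
      have 2: "\<sigma> \<notin> K"
      proof
        assume s: "\<sigma> \<in> K"
        have "insert v \<sigma> \<inter> A = \<sigma>" using A(2) AAi by auto
        then have "R (insert v \<sigma>) A" using s Ai cs by (auto simp: R_def G_def C_def)
        then have "R\<^sup>*\<^sup>* c0 A" using cone_reach[OF s] by (meson rtranclp.rtrancl_into_rtrancl)
        then show False using A by (simp add: CC'_def)
      qed
      show ?thesis using 1 2 by blast
    qed
    have "bd_Z2 (\<A> - CC') = faces_dim \<Omega> d"
    proof (rule set_eqI)
      fix \<sigma>
      show "\<sigma> \<in> bd_Z2 (\<A> - CC') \<longleftrightarrow> \<sigma> \<in> faces_dim \<Omega> d"
      proof (cases "\<exists>A\<in>CC'. \<sigma> \<subseteq> A \<and> card A = Suc (card \<sigma>)")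
        case True
        then obtain A where "A \<in> CC'" "\<sigma> \<subseteq> A" "card A = Suc (card \<sigma>)" by blast
        from key[OF this] have k: "\<forall>A'\<in>\<A>. \<sigma> \<subseteq> A' \<longrightarrow> A' \<in> CC'" "\<sigma> \<notin> K" by auto
        have "{A \<in> \<A> - CC'. \<sigma> \<subseteq> A \<and> card A = Suc (card \<sigma>)} = {}" using k(1) by auto
        then have "\<sigma> \<notin> bd_Z2 (\<A> - CC')" unfolding bd_Z2_def by (simp only: mem_Collect_eq card.empty) simp
        then show ?thesis using k(2) by (simp add: K_def)
      next
        case False
        then have "{A \<in> \<A> - CC'. \<sigma> \<subseteq> A \<and> card A = Suc (card \<sigma>)} =
                   {A \<in> \<A>. \<sigma> \<subseteq> A \<and> card A = Suc (card \<sigma>)}" by auto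
        then have "\<sigma> \<in> bd_Z2 (\<A> - CC') \<longleftrightarrow> \<sigma> \<in> bd_Z2 \<A>" by (simp add: bd_Z2_def)
        then show ?thesis using assms(6) by simp
      qed
    qed
    moreover have "\<A> - CC' \<subset> \<A>" using ne by (auto simp: CC'_def)
    ultimately show False using assms(7) by blast
  qed
  have reach: "R\<^sup>*\<^sup>* c0 x" if "x \<in> G" for x
  proof -
    { assume "x \<in> C" then have ?thesis using cone_reach by (auto simp: C_def) }
    moreover
    { assume "x \<in> \<A>" then have ?thesis using CCempty by (auto simp: CC'_def) }
    ultimately show ?thesis using that by (auto simp: G_def)
  qed
  have Phine: "\<Phi> \<noteq> {}" using GPhi F0 by (auto simp: G_def C_def)
  have pure: "pure_dim \<Phi> (d + 1)"
    unfolding pure_dim_def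
  proof (intro conjI ballI)
    show "\<Phi> \<noteq> {}" by (rule Phine)
    fix S assume S: "S \<in> facets \<Phi>"
    then obtain g where g: "g \<in> G" "S \<subseteq> g" by (auto simp: facets_def Phi_eq)
    have "S = g" using S g GPhi by (auto simp: facets_def)
    then show "card S = d + 1 + 1" using Gcard[OF g(1)] by simp
  qed
  have conn: "d_path_connected \<Phi> (d + 1)"
    unfolding d_path_connected_def
  proof (intro conjI ballI)
    show "pure_dim \<Phi> (d + 1)" by (rule pure)
    fix x y assume xy: "x \<in> faces_dim \<Phi> (d + 1)" "y \<in> faces_dim \<Phi> (d + 1)"
    then have "x \<in> G" "y \<in> G" using top by auto
    then have "R\<^sup>*\<^sup>* x y" using reach Rsym by (meson rtranclp_trans)
    moreover have "\<And>a b. R a b \<Longrightarrow> a \<in> faces_dim \<Phi> (d + 1) \<and> b \<in> faces_dim \<Phi> (d + 1) \<and> card (a \<inter> b) = d + 1"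
      using top by (simp add: R_def)
    ultimately show "\<exists>ps. is_d_path \<Phi> (d + 1) ps \<and> hd ps = x \<and> last ps = y"
      using rtranclp_path xy(1) by blast
  qed
  have par: "even (card {F \<in> faces_dim \<Phi> (d + 1). \<sigma> \<subseteq> F})" if s: "\<sigma> \<in> faces_dim \<Phi> (d + 1 - 1)" for \<sigma>
  proof -
    have s1: "\<sigma> \<in> \<Phi>" "card \<sigma> = d + 1" using s by (auto simp: faces_dim_def)
    obtain g where g: "g \<in> G" "\<sigma> \<subseteq> g" using s1(1) by (auto simp: Phi_eq)
    have fs: "finite \<sigma>" using g Gcard finite_subset by blast
    have split: "{F \<in> faces_dim \<Phi> (d + 1). \<sigma> \<subseteq> F} = {c \<in> C. \<sigma> \<subseteq> c} \<union> {A \<in> \<A>. \<sigma> \<subseteq> A}"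
      using top by (auto simp: G_def)
    have disj: "{c \<in> C. \<sigma> \<subseteq> c} \<inter> {A \<in> \<A>. \<sigma> \<subseteq> A} = {}" using AA K by (auto simp: C_def)
    have finC: "finite C" using finK by (simp add: C_def)
    have cardsum: "card {F \<in> faces_dim \<Phi> (d + 1). \<sigma> \<subseteq> F} = card {c \<in> C. \<sigma> \<subseteq> c} + card {A \<in> \<A>. \<sigma> \<subseteq> A}"
      unfolding split using disj finC finA by (intro card_Un_disjoint) auto
    show ?thesis
    proof (cases "v \<in> \<sigma>")
      case True
      have e1: "{A \<in> \<A>. \<sigma> \<subseteq> A} = {}" using AA True by auto
      define \<rho> where "\<rho> = \<sigma> - {v}"
      have e2: "{c \<in> C. \<sigma> \<subseteq> c} = insert v ` {F \<in> K. \<rho> \<subseteq> F}"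
        using True by (auto simp: C_def \<rho>_def)
      have inj: "inj_on (insert v) {F \<in> K. \<rho> \<subseteq> F}"
        using K by (auto simp: inj_on_def) (metis insert_ident)+
      have "g \<in> C" using g True AA by (auto simp: G_def)
      then obtain F where F: "F \<in> K" "g = insert v F" by (auto simp: C_def)
      have "\<rho> \<subseteq> F" using g F by (auto simp: \<rho>_def)
      then have "\<rho> \<in> \<Omega>" using K[OF F(1)] scO by (auto simp: simplicial_complex_def)
      moreover have "card \<rho> = d - 1 + 1" using s1 True fs assms(1) by (simp add: \<rho>_def)
      ultimately have "\<rho> \<in> faces_dim \<Omega> (d - 1)" by (simp add: faces_dim_def)
      then have "even (card {F \<in> faces_dim \<Omega> d. \<rho> \<subseteq> F})" using assms(4) by (simp add: is_cycle_def)
      then show ?thesis using cardsum e1 e2 card_image[OF inj] by (simp add: K_def)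
    next
      case False
      have e1: "{c \<in> C. \<sigma> \<subseteq> c} = (if \<sigma> \<in> K then {insert v \<sigma>} else {})"
      proof (cases "\<sigma> \<in> K")
        case True
        have "c = insert v \<sigma>" if ct: "c \<in> C" "\<sigma> \<subseteq> c" for c
        proof -
          obtain F where F: "F \<in> K" "c = insert v F" using ct by (auto simp: C_def)
          have "\<sigma> \<subseteq> F" using F ct False by auto
          then have "\<sigma> = F" using K[OF F(1)] s1 by (metis card_subset_eq)
          then show ?thesis using F by simp
        qed
        then show ?thesis using True by (auto simp: C_def)
      next
        case Fa: False
        have "False" if ct: "c \<in> C" "\<sigma> \<subseteq> c" for c
        proof -
          obtain F where F: "F \<in> K" "c = insert v F" using ct by (auto simp: C_def)
          have "\<sigma> \<subseteq> F" using F ct False by auto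
          then have "\<sigma> = F" using K[OF F(1)] s1 by (metis card_subset_eq)
          then show ?thesis using F Fa by simp
        qed
        then show ?thesis using Fa by auto
      qed
      have e2: "{A \<in> \<A>. \<sigma> \<subseteq> A} = {A \<in> \<A>. \<sigma> \<subseteq> A \<and> card A = Suc (card \<sigma>)}"
        using AA s1 by auto
      have "odd (card {A \<in> \<A>. \<sigma> \<subseteq> A}) \<longleftrightarrow> \<sigma> \<in> K"
        using assms(6) e2 by (simp add: bd_Z2_def K_def set_eq_iff)
      then show ?thesis using cardsum e1 by (cases "\<sigma> \<in> K") auto
    qed
  qed
  show ?thesis
    unfolding is_cycle_def using sc pure conn par
    by (simp add: \<Phi>_def G_def C_def K_def)
qed

end
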